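(* For the OGD-CB algorithm (with any value sequence and any realization of competing bids), for every $t\le T_0+1$ we have $\lambda_t\in[0,\bar v/\rho-1]$.
   Context: Model: constants $\bar v>0$, $\rho\in(0,\bar v]$; $T$ rounds; budget $B=\rho T$. Round $t$: value $v_t\in[0,\bar v]$, highest competing bid $p_t\in[0,\bar v]$; buyer picks $x_t\in\{0,1\}$, pays $x_tc_t$ with $c_t=p_t\mathbf 1[v_t\ge p_t]$. Full information: $p_t$ observed every round; partial information: $p_t$ observed only when $x_t=1$. OGD-CB algorithm: $\mathcal I_1=\emptyset$, $B_1=B$, $\lambda_1=0$. For $t=1,\dots,T$: observe $v_t$. If $t=1$: $x_1=1$, $\lambda_2=\lambda_1$. Otherwise: $\epsilon_t=\sqrt{(\ln 2+2\ln T)/(2|\mathcal I_t|)}$; $\tilde r_t(v)=\frac1{|\mathcal I_t|}\sum_{\tau\in\mathcal I_t}(v-p_\tau)^++\epsilon_tv$; $\tilde c_t(v)=\frac1{|\mathcal I_t|}\sum_{\tau\in\mathcal I_t}p_\tau\mathbf 1[v\ge p_\tau]-2\epsilon_tv$; $x_t=\mathbf 1[\tilde r_t(v_t)\ge\lambda_t\tilde c_t(v_t)]$; $\eta_t=1/(\bar v\sqrt t)$; $\lambda_{t+1}=(\lambda_t+\eta_t(x_t\tilde c_t(v_t)-\rho))^+$. If (full information) or (partial information and $x_t=1$) observe $p_t$ and set $\mathcal I_{t+1}=\mathcal I_t\cup\{t\}$, else $\mathcal I_{t+1}=\mathcal I_t$. Set $B_{t+1}=B_t-x_tc_t$; if $B_{t+1}<\bar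 v$, stop. $T_0$ is the stopping round (or $T$). *)

theory Defs
  imports Complex_Main
begin

text \<open>Parameters: vbar, rho, horizon T, information mode
  full (True = full information, False = partial information), value sequence v,
  highest competing bid sequence p (both indexed by rounds 1..T).
  The algorithm state at the start of round t is (I_t, B_t, lambda_t).\<close>

type_synonym ogd_state = "nat set \<times> real \<times> real"

definition eps_ogd :: "nat \<Rightarrow> nat set \<Rightarrow> real" where
  "eps_ogd T I = sqrt ((ln 2 + 2 * ln (real T)) / (2 * real (card I)))"

definition r_tilde :: "nat \<Rightarrow> (nat \<Rightarrow> real) \<Rightarrow> nat set \<Rightarrow> real \<Rightarrow> real" where
  "r_tilde T p I x = (\<Sum>\<tau>\<in>I. max (x - p \<tau>) 0) / real (card I) + eps_ogd T I * x"

definition c_tilde :: "nat \<Rightarrow> (nat \<Rightarrow> real) \<Rightarrow> nat set \<Rightarrow> real \<Rightarrow> real" where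
  "c_tilde T p I x = (\<Sum>\<tau>\<in>I. p \<tau> * (if x \<ge> p \<tau> then 1 else 0)) / real (card I)
                      - 2 * eps_ogd T I * x"

definition ogd_x :: "nat \<Rightarrow> (nat \<Rightarrow> real) \<Rightarrow> (nat \<Rightarrow> real) \<Rightarrow> nat \<Rightarrow> ogd_state \<Rightarrow> bool" where
  "ogd_x T v p t s = (case s of (I, B, lam) \<Rightarrow>
      if t = 1 then True
      else r_tilde T p I (v t) \<ge> lam * c_tilde T p I (v t))"

definition pay :: "(nat \<Rightarrow> real) \<Rightarrow> (nat \<Rightarrow> real) \<Rightarrow> nat \<Rightarrow> real" where
  "pay v p t = (if v t \<ge> p t then p t else 0)"

definition ogd_step :: "real \<Rightarrow> real \<Rightarrow> nat \<Rightarrow> bool \<Rightarrow> (nat \<Rightarrow> real) \<Rightarrow> (nat \<Rightarrow> real)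
                         \<Rightarrow> nat \<Rightarrow> ogd_state \<Rightarrow> ogd_state" where
  "ogd_step vbar rho T full v p t s = (case s of (I, B, lam) \<Rightarrow>
      let x = ogd_x T v p t s;
          lam' = (if t = 1 then lam
                  else max 0 (lam + (1 / (vbar * sqrt (real t))) *
                          ((if x then c_tilde T p I (v t) else 0) - rho)));
          I' = (if full \<or> x then insert t I else I);
          B' = B - (if x then pay v p t else 0)
      in (I', B', lam'))"

text \<open>ogd_state_at ... t is the state at the start of round t (t >= 1):
  state 1 = ({}, rho*T, 0), state (t+1) = step t (state t).  The recursion is
  continued past the stopping round; only rounds t <= T0 + 1 are used.\<close>
fun ogd_state_at :: "real \<Rightarrow> real \<Rightarrow> nat \<Rightarrow> bool \<Rightarrow> (nat \<Rightarrow> real) \<Rightarrow> (nat \<Rightarrow> real)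
                      \<Rightarrow> nat \<Rightarrow> ogd_state" where
  "ogd_state_at vbar rho T full v p 0 = ({}, rho * real T, 0)"
| "ogd_state_at vbar rho T full v p (Suc t) =
     (if t = 0 then ({}, rho * real T, 0)
      else ogd_step vbar rho T full v p t (ogd_state_at vbar rho T full v p t))"

definition ogd_budget :: "real \<Rightarrow> real \<Rightarrow> nat \<Rightarrow> bool \<Rightarrow> (nat \<Rightarrow> real) \<Rightarrow> (nat \<Rightarrow> real) \<Rightarrow> nat \<Rightarrow> real" where
  "ogd_budget vbar rho T full v p t = fst (snd (ogd_state_at vbar rho T full v p t))"

definition ogd_lambda :: "real \<Rightarrow> real \<Rightarrow> nat \<Rightarrow> bool \<Rightarrow> (nat \<Rightarrow> real) \<Rightarrow> (nat \<Rightarrow> real) \<Rightarrow> nat \<Rightarrow> real" where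
  "ogd_lambda vbar rho T full v p t = snd (snd (ogd_state_at vbar rho T full v p t))"

definition ogd_T0 :: "real \<Rightarrow> real \<Rightarrow> nat \<Rightarrow> bool \<Rightarrow> (nat \<Rightarrow> real) \<Rightarrow> (nat \<Rightarrow> real) \<Rightarrow> nat" where
  "ogd_T0 vbar rho T full v p =
     (if \<exists>t. 1 \<le> t \<and> t \<le> T \<and> ogd_budget vbar rho T full v p (Suc t) < vbar
      then (LEAST t. 1 \<le> t \<and> t \<le> T \<and> ogd_budget vbar rho T full v p (Suc t) < vbar)
      else T)"

end

theory Submission
  imports Defs
begin
lemma step_bound:
  fixes vbar rho lam c r x eta :: real
  assumes "vbar > 0" "rho > 0" "rho \<le> vbar" "0 \<le> lam" "lam \<le> vbar/rho - 1"
    "x \<le> vbar" "r + c \<le> x" "b \<Longrightarrow> lam * c \<le> r" "0 \<le> eta" "eta \<le> 1/vbar"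
  shows "max 0 (lam + eta*((if b then c else 0) - rho)) \<le> vbar/rho - 1"
proof (cases "b \<and> c > rho")
  case False
  then have "eta*((if b then c else 0) - rho) \<le> 0"
    using assms by (auto intro: mult_nonneg_nonpos)
  moreover have "0 \<le> vbar/rho - 1" using assms by (simp add: field_simps)
  ultimately show ?thesis using assms by simp
next
  case True
  define L where "L = lam + 1"
  define a where "a = vbar / rho"
  have L1: "L \<ge> 1" using assms L_def by simp
  have Lc: "L * c \<le> vbar" using True assms unfolding L_def by (simp add: algebra_simps)
  have cpos: "c > 0" using True assms by simp
  have cle: "c \<le> vbar / L" using Lc L1 by (simp add: field_simps)
  have "L * rho < L * c" using True L1 by simp
  then have "L * rho < vbar" using Lc by linarith
  then have La: "L < a" unfolding a_def using assms by (simp add: pos_less_divide_eq)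
  have e1: "eta*(c - rho) \<le> (c - rho)/vbar"
  proof -
    have "eta*(c - rho) \<le> (1/vbar)*(c-rho)" using True assms by (intro mult_right_mono) auto
    then show ?thesis by simp
  qed
  have e2: "(c - rho)/vbar \<le> 1/L - 1/a"
    using cle assms L1 unfolding a_def by (simp add: field_simps)
  have key: "L + 1/L \<le> a + 1/a"
  proof -
    have a1: "a \<ge> 1" using assms unfolding a_def by simp
    have "a + 1/a - L - 1/L = (a-L)*(1 - 1/(a*L))" using L1 a1 by (simp add: field_simps)
    moreover have "1/(a*L) \<le> 1"
    proof -
      have "1*1 \<le> a*L" using L1 a1 by (intro mult_mono) auto
      then show ?thesis by simp
    qed
    ultimately show ?thesis using La by (smt (verit) mult_nonneg_nonneg)
  qed
  have "lam + eta*(c - rho) \<le> a - 1" using e1 e2 key L_def by linarith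
  moreover have "0 \<le> a - 1" using assms unfolding a_def by simp
  ultimately show ?thesis using True a_def by simp
qed

lemma rc_le:
  fixes x :: real
  assumes "0 \<le> x" "T \<ge> 1"
  shows "r_tilde T p I x + c_tilde T p I x \<le> x"
proof -
  have eps: "0 \<le> eps_ogd T I" unfolding eps_ogd_def using assms by simp
  have s: "(\<Sum>\<tau>\<in>I. max (x - p \<tau>) 0) + (\<Sum>\<tau>\<in>I. p \<tau> * (if x \<ge> p \<tau> then 1 else 0))
      = (\<Sum>\<tau>\<in>I. max (x - p \<tau>) 0 + p \<tau> * (if x \<ge> p \<tau> then 1 else 0))"
    by (simp add: sum.distrib)
  have le: "(\<Sum>\<tau>\<in>I. max (x - p \<tau>) 0 + p \<tau> * (if x \<ge> p \<tau> then 1 else 0)) \<le> real (card I) * x"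
  proof (cases "finite I")
    case True
    have "(\<Sum>\<tau>\<in>I. max (x - p \<tau>) 0 + p \<tau> * (if x \<ge> p \<tau> then 1 else 0)) \<le> (\<Sum>\<tau>\<in>I. x)"
      by (rule sum_mono) (use assms in auto)
    then show ?thesis by simp
  next
    case False then show ?thesis by simp
  qed
  have d: "(\<Sum>\<tau>\<in>I. max (x - p \<tau>) 0 + p \<tau> * (if x \<ge> p \<tau> then 1 else 0)) / real (card I) \<le> x"
  proof (cases "card I = 0")
    case True then show ?thesis using assms by simp
  next
    case False then show ?thesis using le by (simp add: divide_le_eq mult.commute)
  qed
  have "r_tilde T p I x + c_tilde T p I x =
     (\<Sum>\<tau>\<in>I. max (x - p \<tau>) 0 + p \<tau> * (if x \<ge> p \<tau> then 1 else 0)) / real (card I) - eps_ogd T I * x"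
    unfolding r_tilde_def c_tilde_def s[symmetric] by (simp add: add_divide_distrib)
  also have "\<dots> \<le> x" using d eps assms by (smt (verit) mult_nonneg_nonneg)
  finally show ?thesis .
qed

lemma inv:
  fixes vbar rho :: real and T :: nat and full :: bool and v p :: "nat \<Rightarrow> real"
  assumes "vbar > 0" and "0 < rho" and "rho \<le> vbar"
    and "\<And>t. 1 \<le> t \<Longrightarrow> t \<le> T \<Longrightarrow> 0 \<le> v t \<and> v t \<le> vbar"
  shows "t \<le> T + 1 \<Longrightarrow> 0 \<le> ogd_lambda vbar rho T full v p t \<and>
           ogd_lambda vbar rho T full v p t \<le> vbar / rho - 1"
proof (induction t)
  case 0
  have "0 \<le> vbar/rho - 1" using assms by (simp add: field_simps)
  then show ?case by (simp add: ogd_lambda_def)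
next
  case (Suc t)
  have a0: "0 \<le> vbar/rho - 1" using assms by (simp add: field_simps)
  show ?case
  proof (cases "t = 0")
    case True then show ?thesis using a0 by (simp add: ogd_lambda_def)
  next
    case False
    then have t1: "1 \<le> t" and tT: "t \<le> T" using Suc.prems by auto
    have IH: "0 \<le> ogd_lambda vbar rho T full v p t \<and> ogd_lambda vbar rho T full v p t \<le> vbar / rho - 1"
      using Suc.IH Suc.prems by simp
    obtain I B lam where st: "ogd_state_at vbar rho T full v p t = (I, B, lam)"
      by (metis prod_cases3)
    have lam: "0 \<le> lam" "lam \<le> vbar/rho - 1" using IH st by (auto simp: ogd_lambda_def)
    have vt: "0 \<le> v t" "v t \<le> vbar" using assms(4)[OF t1 tT] by auto
    have T1: "T \<ge> 1" using t1 tT by simp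
    have eq: "ogd_lambda vbar rho T full v p (Suc t) =
      (if t = 1 then lam else max 0 (lam + (1 / (vbar * sqrt (real t))) *
          ((if ogd_x T v p t (I, B, lam) then c_tilde T p I (v t) else 0) - rho)))"
      using False st by (simp add: ogd_lambda_def ogd_step_def Let_def)
    have eta: "0 \<le> 1 / (vbar * sqrt (real t))" "1 / (vbar * sqrt (real t)) \<le> 1/vbar"
      using assms t1 by (auto simp: field_simps)
    have bx: "ogd_x T v p t (I, B, lam) \<Longrightarrow> lam * c_tilde T p I (v t) \<le> r_tilde T p I (v t) \<or> t = 1"
      by (auto simp: ogd_x_def)
    show ?thesis
    proof (cases "t = 1")
      case True then show ?thesis using eq lam by simp
    next
      case False
      have "max 0 (lam + (1 / (vbar * sqrt (real t))) *
          ((if ogd_x T v p t (I, B, lam) then c_tilde T p I (v t) else 0) - rho)) \<le> vbar/rho - 1"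
        apply (rule step_bound[where r = "r_tilde T p I (v t)" and x = "v t"])
        using assms lam vt eta bx False rc_le[OF vt(1) T1, of p I] by auto
      then show ?thesis using eq False by simp
    qed
  qed
qed

theorem lemma2:
  fixes vbar rho :: real and T :: nat and full :: bool and v p :: "nat \<Rightarrow> real"
  assumes "vbar > 0" and "0 < rho" and "rho \<le> vbar"
    and "\<And>t. 1 \<le> t \<Longrightarrow> t \<le> T \<Longrightarrow> 0 \<le> v t \<and> v t \<le> vbar"
    and "\<And>t. 1 \<le> t \<Longrightarrow> t \<le> T \<Longrightarrow> 0 \<le> p t \<and> p t \<le> vbar"
  shows "\<forall>t. 1 \<le> t \<and> t \<le> ogd_T0 vbar rho T full v p + 1 \<longrightarrow>
           0 \<le> ogd_lambda vbar rho T full v p t \<and>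
           ogd_lambda vbar rho T full v p t \<le> vbar / rho - 1"
proof (intro allI impI)
  fix t assume h: "1 \<le> t \<and> t \<le> ogd_T0 vbar rho T full v p + 1"
  have "ogd_T0 vbar rho T full v p \<le> T"
  proof (cases "\<exists>t. 1 \<le> t \<and> t \<le> T \<and> ogd_budget vbar rho T full v p (Suc t) < vbar")
    case True
    then obtain s where s: "1 \<le> s \<and> s \<le> T \<and> ogd_budget vbar rho T full v p (Suc s) < vbar" by blast
    have "(LEAST t. 1 \<le> t \<and> t \<le> T \<and> ogd_budget vbar rho T full v p (Suc t) < vbar) \<le> s"
      by (rule Least_le) (rule s)
    then show ?thesis using True s unfolding ogd_T0_def by simp
  next
    case False then show ?thesis unfolding ogd_T0_def by auto
  qed
  then show "0 \<le> ogd_lambda vbar rho T full v p t \<and> ogd_lambda vbar rho T full v p t \<le> vbar / rho - 1"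
    using inv[OF assms(1-4)] h by simp
qed

end
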